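(* For every choice of parameters $\lambda>0$, $\eta\in(0,1)$, $g_l^*>0$, integers $t\ge1$ and $\mathit{Depth}_{\max}\ge 1$, and privacy budget $\varepsilon_t>0$, the algorithm TrainSingleTree described below is $\varepsilon_t$-differentially private, i.e. for all neighboring datasets $D,D'$ and every measurable set $O$ of outputs, $\Pr[\mathcal A(D)\in O]\le e^{\varepsilon_t}\Pr[\mathcal A(D')\in O]$.
   Context: A dataset is a finite collection of records $i$, each consisting of a feature vector $\mathbf x_i\in\mathbb R^d$, a label $y_i\in[-1,1]$ and a gradient $g_i\in\mathbb R$ determined by the record (e.g. $g_i=\partial l(y_i,y)/\partial y$ evaluated at the prediction of a fixed, data-independent current model). Two datasets are neighboring if one is obtained from the other by adding or removing one record. Splits of a node are chosen from a fixed finite set of candidate splits (feature index, threshold), each partitioning the node's records into a left set $I_L$ and right set $I_R$. Let $G(I_L,I_R)=\frac{(\sum_{i\in I_L}g_i)^2}{|I_L|+\lambda}+\frac{(\sum_{i\in I_R}g_i)^2}{|I_R|+\lambda}$, $V(I)=-\frac{\sum_{i\in I}g_i}{|I|+\lambda}$, $\Delta G=3{g_l^*}^2$, $\Delta V=\min\left(\frac{g_l^*}{1+\lambda},2g_l^*(1-\eta)^{t-1}\right)$. Algorithm TrainSingleTree on dataset $I$: (1) set $\varepsilon_{leaf}=\varepsilon_t/2$ and $\varepsilon_{nleaf}=\varepsilon_t/(2\mathit{Depth}_{\max})$; (2) discard all records with $|g_i|>g_l^*$; (3) starting from a root node containing all remaining records, for $depth=1,\dots,\mathit{Depth}_{\max}$,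 for each node at the current depth: for each candidate split $j$ compute $G_j=G(I_L,I_R)$ on the node's records, choose split $s$ with probability $P_s/\sum_j P_j$ where $P_j=\exp\left(\frac{\varepsilon_{nleaf}G_j}{2\Delta G}\right)$, and split the node accordingly; (4) for each resulting leaf with record set $I_\ell$, compute $V=V(I_\ell)$, clip it to $V'=V\cdot\min(1,g_l^*(1-\eta)^{t-1}/|V|)$ (with $V'=0$ if $V=0$), and release $V'+\mathrm{Lap}(0,\Delta V/\varepsilon_{leaf})$ using independent Laplace noise of mean $0$ and scale $\Delta V/\varepsilon_{leaf}$. The output is the tree structure (all chosen splits) together with the noisy leaf values. *)

theory Defs
  imports "HOL-Probability.Probability"
begin

type_synonym 'd rcd = "(real^'d) \<times> real \<times> real"

definition feat :: "('d::finite) rcd \<Rightarrow> real^'d" where "feat r = fst r"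
definition lab  :: "('d::finite) rcd \<Rightarrow> real" where "lab r = fst (snd r)"
definition grad :: "('d::finite) rcd \<Rightarrow> real" where "grad r = snd (snd r)"

type_synonym 'd dataset = "('d::finite) rcd multiset"

definition neighboring :: "('d::finite) dataset \<Rightarrow> ('d::finite) dataset \<Rightarrow> bool" where
  "neighboring D D' \<longleftrightarrow> (\<exists>r. D' = add_mset r D \<or> D = add_mset r D')"

type_synonym 'd split = "'d \<times> real"

definition goes_left :: "('d::finite) split \<Rightarrow> ('d::finite) rcd \<Rightarrow> bool" where
  "goes_left c r \<longleftrightarrow> feat r $ fst c \<le> snd c"

definition left_part :: "('d::finite) split \<Rightarrow> ('d::finite) dataset \<Rightarrow> ('d::finite) dataset" where
  "left_part c I = filter_mset (goes_left c) I"
definition right_part :: "('d::finite) split \<Rightarrow> ('d::finite) dataset \<Rightarrow> ('d::finite) dataset" where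
  "right_part c I = filter_mset (\<lambda>r. \<not> goes_left c r) I"

definition gsum :: "('d::finite) dataset \<Rightarrow> real" where
  "gsum I = (\<Sum>r\<in>#I. grad r)"

definition Gain :: "real \<Rightarrow> ('d::finite) dataset \<Rightarrow> ('d::finite) dataset \<Rightarrow> real" where
  "Gain lam IL IR = (gsum IL)^2 / (real (size IL) + lam) + (gsum IR)^2 / (real (size IR) + lam)"

definition Vleaf :: "real \<Rightarrow> ('d::finite) dataset \<Rightarrow> real" where
  "Vleaf lam I = - gsum I / (real (size I) + lam)"

definition DeltaG :: "real \<Rightarrow> real" where
  "DeltaG gl = 3 * gl^2"

definition DeltaV :: "real \<Rightarrow> real \<Rightarrow> real \<Rightarrow> nat \<Rightarrow> real" where
  "DeltaV lam eta gl t = min (gl / (1 + lam)) (2 * gl * (1 - eta)^(t - 1))"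

definition clipV :: "real \<Rightarrow> real \<Rightarrow> nat \<Rightarrow> real \<Rightarrow> real" where
  "clipV eta gl t V = (if V = 0 then 0 else V * min 1 (gl * (1 - eta)^(t - 1) / \<bar>V\<bar>))"

definition laplace :: "real \<Rightarrow> real \<Rightarrow> real measure" where
  "laplace mu b = density lborel (\<lambda>x. ennreal (exp (- \<bar>x - mu\<bar> / b) / (2 * b)))"

definition split_weight :: "real \<Rightarrow> real \<Rightarrow> real \<Rightarrow> ('d::finite) dataset \<Rightarrow> ('d::finite) split \<Rightarrow> real" where
  "split_weight lam gl epsn I c = exp (epsn * Gain lam (left_part c I) (right_part c I) / (2 * DeltaG gl))"

definition exp_mech :: "real \<Rightarrow> real \<Rightarrow> real \<Rightarrow> ('d::finite) split set \<Rightarrow> ('d::finite) dataset \<Rightarrow> ('d::finite) split pmf" where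
  "exp_mech lam gl epsn C I = embed_pmf (\<lambda>c. if c \<in> C then
      split_weight lam gl epsn I c / (\<Sum>c'\<in>C. split_weight lam gl epsn I c') else 0)"

text \<open>Tree structure: maps a node (path from root, True = left child) to its chosen split.
  grow k I grows a complete tree of k split levels on records I.\<close>
fun grow :: "real \<Rightarrow> real \<Rightarrow> real \<Rightarrow> ('d::finite) split set \<Rightarrow> nat \<Rightarrow> ('d::finite) dataset \<Rightarrow> (bool list \<Rightarrow> ('d::finite) split) pmf" where
  "grow lam gl epsn C 0 I = return_pmf (\<lambda>_. undefined)"
| "grow lam gl epsn C (Suc k) I =
     bind_pmf (exp_mech lam gl epsn C I) (\<lambda>c.
     bind_pmf (grow lam gl epsn C k (left_part c I)) (\<lambda>l.
     bind_pmf (grow lam gl epsn C k (right_part c I)) (\<lambda>r.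
     return_pmf (\<lambda>p. case p of [] \<Rightarrow> c | b # q \<Rightarrow> (if b then l q else r q)))))"

fun node_recs :: "(bool list \<Rightarrow> ('d::finite) split) \<Rightarrow> ('d::finite) dataset \<Rightarrow> bool list \<Rightarrow> ('d::finite) dataset" where
  "node_recs s I [] = I"
| "node_recs s I (b # q) =
     node_recs (\<lambda>q'. s (b # q')) (if b then left_part (s []) I else right_part (s []) I) q"

definition leaves :: "nat \<Rightarrow> bool list set" where
  "leaves Dmax = {p. length p = Dmax}"

definition outM :: "nat \<Rightarrow> ((bool list \<Rightarrow> ('d::finite) split) \<times> (bool list \<Rightarrow> real)) measure" where
  "outM Dmax = count_space UNIV \<Otimes>\<^sub>M PiM (leaves Dmax) (\<lambda>_. borel)"

definition TrainSingleTree ::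
  "real \<Rightarrow> real \<Rightarrow> real \<Rightarrow> nat \<Rightarrow> nat \<Rightarrow> real \<Rightarrow> ('d::finite) split set \<Rightarrow> ('d::finite) dataset
     \<Rightarrow> ((bool list \<Rightarrow> ('d::finite) split) \<times> (bool list \<Rightarrow> real)) measure" where
  "TrainSingleTree lam eta gl t Dmax eps C D =
    (let el = eps / 2;
         en = eps / (2 * real Dmax);
         I0 = filter_mset (\<lambda>r. \<bar>grad r\<bar> \<le> gl) D
     in bind (measure_pmf (grow lam gl en C Dmax I0)) (\<lambda>s.
          distr (PiM (leaves Dmax) (\<lambda>p.
                   laplace (clipV eta gl t (Vleaf lam (node_recs s I0 p))) (DeltaV lam eta gl t / el)))
                (outM Dmax) (\<lambda>v. (s, v))))"

end

theory Submission
  imports Defs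
begin

definition pmf_le :: "real \<Rightarrow> 'a pmf \<Rightarrow> 'a pmf \<Rightarrow> bool" where
  "pmf_le a p q \<longleftrightarrow> (\<forall>x. pmf p x \<le> a * pmf q x)"

lemma nn_integral_pmf_le:
  assumes "pmf_le a p q" "a \<ge> 0"
  shows "(\<integral>\<^sup>+x. h x \<partial>measure_pmf p) \<le> ennreal a * (\<integral>\<^sup>+x. h x \<partial>measure_pmf q)"
proof -
  have "(\<integral>\<^sup>+x. h x \<partial>measure_pmf p) = (\<integral>\<^sup>+x. ennreal (pmf p x) * h x \<partial>count_space UNIV)"
    by (rule nn_integral_measure_pmf)
  also have "\<dots> \<le> (\<integral>\<^sup>+x. ennreal a * (ennreal (pmf q x) * h x) \<partial>count_space UNIV)"
  proof (rule nn_integral_mono)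
    fix x
    have "ennreal (pmf p x) \<le> ennreal a * ennreal (pmf q x)"
      using assms by (simp add: pmf_le_def ennreal_mult[symmetric] ennreal_leI)
    then show "ennreal (pmf p x) * h x \<le> ennreal a * (ennreal (pmf q x) * h x)"
      by (metis mult.assoc mult_right_mono zero_le)
  qed
  also have "\<dots> = ennreal a * (\<integral>\<^sup>+x. ennreal (pmf q x) * h x \<partial>count_space UNIV)"
    by (rule nn_integral_cmult) simp
  also have "\<dots> = ennreal a * (\<integral>\<^sup>+x. h x \<partial>measure_pmf q)"
    by (simp add: nn_integral_measure_pmf)
  finally show ?thesis .
qed

lemma pmf_le_from_ennreal:
  assumes "a \<ge> 0" "\<And>x. ennreal (pmf p x) \<le> ennreal a * ennreal (pmf q x)"
  shows "pmf_le a p q"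
  unfolding pmf_le_def
proof
  fix x
  have "ennreal (pmf p x) \<le> ennreal (a * pmf q x)"
    using assms by (simp add: ennreal_mult)
  then show "pmf p x \<le> a * pmf q x"
    using assms(1) by (simp add: ennreal_le_iff)
qed

lemma pmf_le_bind1:
  assumes "pmf_le a p q" "a \<ge> 0"
  shows "pmf_le a (bind_pmf p f) (bind_pmf q f)"
  using assms nn_integral_pmf_le[OF assms, of "\<lambda>x. pmf (f x) _"]
  by (intro pmf_le_from_ennreal) (simp_all add: ennreal_pmf_bind)

lemma pmf_le_bind2:
  assumes "\<And>x. pmf_le a (f x) (g x)" "a \<ge> 0"
  shows "pmf_le a (bind_pmf p f) (bind_pmf p g)"
proof (rule pmf_le_from_ennreal[OF assms(2)])
  fix y
  have "ennreal (pmf (bind_pmf p f) y) = (\<integral>\<^sup>+x. pmf (f x) y \<partial>measure_pmf p)"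
    by (simp add: ennreal_pmf_bind)
  also have "\<dots> \<le> (\<integral>\<^sup>+x. ennreal a * pmf (g x) y \<partial>measure_pmf p)"
    using assms by (intro nn_integral_mono) (simp add: pmf_le_def ennreal_mult[symmetric] ennreal_leI)
  also have "\<dots> = ennreal a * (\<integral>\<^sup>+x. pmf (g x) y \<partial>measure_pmf p)"
    by (rule nn_integral_cmult) simp
  also have "\<dots> = ennreal a * ennreal (pmf (bind_pmf p g) y)"
    by (simp add: ennreal_pmf_bind)
  finally show "ennreal (pmf (bind_pmf p f) y) \<le> ennreal a * ennreal (pmf (bind_pmf p g) y)" .
qed

lemma pmf_le_trans:
  assumes "pmf_le a p q" "pmf_le b q r" "a \<ge> 0"
  shows "pmf_le (a * b) p r"
  unfolding pmf_le_def
proof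
  fix x
  have "pmf p x \<le> a * pmf q x" using assms by (simp add: pmf_le_def)
  also have "\<dots> \<le> a * (b * pmf r x)" using assms by (intro mult_left_mono) (auto simp: pmf_le_def)
  finally show "pmf p x \<le> a * b * pmf r x" by (simp add: mult.assoc)
qed

lemma pmf_le_refl: "a \<ge> 1 \<Longrightarrow> pmf_le a p p"
  unfolding pmf_le_def using pmf_nonneg
  by (metis mult_le_cancel_right1 not_le order.strict_iff_not)

definition bnd :: "real \<Rightarrow> ('d::finite) dataset \<Rightarrow> bool" where
  "bnd gl I \<longleftrightarrow> (\<forall>r\<in>#I. \<bar>grad r\<bar> \<le> gl)"

definition clos :: "real \<Rightarrow> ('d::finite) dataset \<Rightarrow> ('d::finite) dataset \<Rightarrow> bool" where
  "clos gl I J \<longleftrightarrow> I = J \<or> (\<exists>r. \<bar>grad r\<bar> \<le> gl \<and> (J = add_mset r I \<or> I = add_mset r J))"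

lemma gsum_add[simp]: "gsum (add_mset r I) = grad r + gsum I"
  by (simp add: gsum_def)

lemma gsum_bound: "bnd gl I \<Longrightarrow> \<bar>gsum I\<bar> \<le> real (size I) * gl"
proof (induction I)
  case empty then show ?case by (simp add: gsum_def)
next
  case (add r I)
  then have "bnd gl I" "\<bar>grad r\<bar> \<le> gl" by (auto simp: bnd_def)
  with add.IH have "\<bar>gsum I\<bar> \<le> real (size I) * gl" by simp
  then show ?case using \<open>\<bar>grad r\<bar> \<le> gl\<close> by (simp add: algebra_simps)
qed

lemma f_sens:
  fixes S g gl a :: real
  assumes "a > 0" "\<bar>S\<bar> \<le> a * gl" "\<bar>g\<bar> \<le> gl"
  shows "\<bar>(S+g)^2/(a+1) - S^2/a\<bar> \<le> 3 * gl^2"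
proof -
  have gl: "gl \<ge> 0" using assms by linarith
  have e: "(S+g)^2/(a+1) - S^2/a = ((2*S*g + g^2)*a - S^2) / (a*(a+1))"
    using assms by (simp add: field_simps power2_eq_square)
  have h1: "\<bar>2*S*g*a\<bar> \<le> 2 * a^2 * gl^2"
  proof -
    have "\<bar>S*g\<bar> \<le> (a*gl)*gl" unfolding abs_mult using assms gl by (intro mult_mono) auto
    then show ?thesis using assms by (simp add: abs_mult power2_eq_square)
  qed
  have h2: "g^2 * a \<le> gl^2 * a" using assms
    using power_mono[of "\<bar>g\<bar>" gl 2] by (intro mult_right_mono) auto
  have h3: "S^2 \<le> a^2*gl^2"
  proof -
    have "S^2 = \<bar>S\<bar>^2" by simp
    also have "\<dots> \<le> (a*gl)^2" by (rule power_mono) (use assms in auto)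
    finally show ?thesis by (simp add: power_mult_distrib)
  qed
  have "\<bar>(2*S*g + g^2)*a - S^2\<bar> \<le> 3 * gl^2 * (a*(a+1))"
  proof -
    have "\<bar>(2*S*g + g^2)*a - S^2\<bar> \<le> \<bar>2*S*g*a\<bar> + g^2*a + S^2"
      using assms by (simp add: algebra_simps abs_triangle_ineq4) (smt (verit) abs_triangle_ineq abs_ge_zero zero_le_power2 mult_nonneg_nonneg)
    also have "\<dots> \<le> 2 * a^2 * gl^2 + gl^2 * a + a^2*gl^2" using h1 h2 h3 by linarith
    also have "\<dots> \<le> 3 * gl^2 * (a*(a+1))"
      using assms by (simp add: algebra_simps power2_eq_square)
    finally show ?thesis .
  qed
  moreover have pos: "a*(a+1) > 0" using assms by simp
  ultimately have "\<bar>(2*S*g + g^2)*a - S^2\<bar> / (a*(a+1)) \<le> 3 * gl^2"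
    by (simp add: pos_divide_le_eq)
  moreover have "\<bar>((2*S*g + g^2)*a - S^2) / (a*(a+1))\<bar> = \<bar>(2*S*g + g^2)*a - S^2\<bar> / (a*(a+1))"
    using pos by (simp add: abs_divide)
  ultimately show ?thesis unfolding e using pos by (simp add: abs_divide)
qed


lemma v_sens:
  fixes S g gl lam :: real and n :: nat
  assumes "lam > 0" "\<bar>S\<bar> \<le> real n * gl" "\<bar>g\<bar> \<le> gl"
  shows "\<bar>S/(real n + lam) - (S+g)/(real n + lam + 1)\<bar> \<le> gl/(1+lam)"
proof -
  define a where "a = real n + lam"
  have a: "a > 0" using assms by (simp add: a_def add_nonneg_pos)
  have gl: "gl \<ge> 0" using assms by linarith
  have e: "S/a - (S+g)/(a+1) = (S - a*g) / (a*(a+1))"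
    using a by (simp add: field_simps)
  have "\<bar>S - a*g\<bar> \<le> \<bar>S\<bar> + a * \<bar>g\<bar>"
    using abs_triangle_ineq4[of S "a*g"] a by (simp add: abs_mult)
  also have "\<dots> \<le> real n * gl + a * gl" using assms a by (intro add_mono mult_left_mono) auto
  finally have h: "\<bar>S - a*g\<bar> \<le> (2 * real n + lam) * gl" by (simp add: a_def algebra_simps)
  have nn: "real n \<le> real n * real n"
    by (metis of_nat_le_iff of_nat_mult le_square)
  have k: "(2 * real n + lam) * (1 + lam) \<le> a * (a+1)"
    using nn by (simp add: a_def algebra_simps)
  have "\<bar>S - a*g\<bar> * (1+lam) \<le> (2 * real n + lam) * gl * (1+lam)"
    using h assms by (intro mult_right_mono) auto
  also have "\<dots> = gl * ((2 * real n + lam) * (1 + lam))" by (simp add: algebra_simps)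
  also have "\<dots> \<le> gl * (a*(a+1))" using k gl by (intro mult_left_mono) auto
  finally have hh: "\<bar>S - a*g\<bar> * (1+lam) \<le> gl * (a*(a+1))" .
  have pos: "a*(a+1) > 0" using a by simp
  have "\<bar>S - a*g\<bar> / (a*(a+1)) \<le> gl/(1+lam)"
    using hh pos assms by (simp add: divide_simps mult.commute)
  then show ?thesis using pos unfolding a_def[symmetric] e by (simp add: abs_divide add.commute)
qed

lemma clipV_eq:
  assumes "gl * (1-eta)^(t-1) > 0"
  shows "clipV eta gl t V = max (- (gl * (1-eta)^(t-1))) (min (gl * (1-eta)^(t-1)) V)"
proof -
  define B where "B = gl * (1-eta)^(t-1)"
  have B: "B > 0" using assms B_def by simp
  have cv: "clipV eta gl t V = (if V = 0 then 0 else V * min 1 (B/\<bar>V\<bar>))"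
    by (simp add: clipV_def B_def)
  have "clipV eta gl t V = max (-B) (min B V)"
  proof (cases "V = 0")
    case True then show ?thesis using B by (simp add: clipV_def)
  next
    case False
    show ?thesis
    proof (cases "\<bar>V\<bar> \<le> B")
      case True
      then have "min 1 (B/\<bar>V\<bar>) = 1" using False by (simp add: min_def divide_simps)
      then show ?thesis using True False B by (simp add: max_def min_def cv) linarith
    next
      case c: False
      then have "min 1 (B/\<bar>V\<bar>) = B/\<bar>V\<bar>" using B by (simp add: min_def divide_simps)
      then show ?thesis using c False B
        by (cases "V > 0") (auto simp: max_def min_def cv)
    qed
  qed
  then show ?thesis by (simp add: B_def)
qed

lemma clip_lip:
  fixes B x y :: real
  assumes "B > 0"
  shows "\<bar>max (-B) (min B x) - max (-B) (min B y)\<bar> \<le> \<bar>x - y\<bar>"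
    and "\<bar>max (-B) (min B x) - max (-B) (min B y)\<bar> \<le> 2 * B"
  using assms by (smt (verit))+

lemma bnd_add: "bnd gl (add_mset r I) \<longleftrightarrow> \<bar>grad r\<bar> \<le> gl \<and> bnd gl I"
  by (auto simp: bnd_def)

lemma vleaf_add_sens:
  assumes "lam > 0" "bnd gl I" "\<bar>grad r\<bar> \<le> gl"
  shows "\<bar>Vleaf lam I - Vleaf lam (add_mset r I)\<bar> \<le> gl/(1+lam)"
proof -
  have "\<bar>gsum I\<bar> \<le> real (size I) * gl" using gsum_bound assms by blast
  from v_sens[OF assms(1) this assms(3)]
  have h: "\<bar>gsum I / (real (size I) + lam) - (gsum I + grad r) / (real (size I) + lam + 1)\<bar> \<le> gl / (1 + lam)" .
  have e1: "Vleaf lam I = - (gsum I/(real (size I) + lam))" by (simp add: Vleaf_def)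
  have e2: "Vleaf lam (add_mset r I) = - ((gsum I + grad r)/(real (size I) + lam + 1))"
    by (simp add: Vleaf_def add_ac, simp add: divide_simps)
  have ab: "\<bar>- x - - y\<bar> = \<bar>x - y\<bar>" for x y :: real by linarith
  show ?thesis unfolding e1 e2 ab by (rule h)
qed

lemma vleaf_sens:
  assumes "lam > 0" "bnd gl I" "bnd gl J" "clos gl I J" "gl \<ge> 0"
  shows "\<bar>Vleaf lam I - Vleaf lam J\<bar> \<le> gl/(1+lam)"
proof -
  have gl: "gl/(1+lam) \<ge> 0" using assms by simp
  from assms(4) consider "I = J" | r where "\<bar>grad r\<bar> \<le> gl" "J = add_mset r I"
    | r where "\<bar>grad r\<bar> \<le> gl" "I = add_mset r J" unfolding clos_def by blast
  then show ?thesis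
  proof cases
    case 1 then show ?thesis using gl by auto
  next
    case (2 r) then show ?thesis using vleaf_add_sens assms by blast
  next
    case (3 r) then show ?thesis using vleaf_add_sens[of lam gl J r] assms by (simp add: abs_minus_commute)
  qed
qed

lemma leaf_sens:
  assumes "lam > 0" "0 < eta" "eta < 1" "gl > 0" "bnd gl I" "bnd gl J" "clos gl I J"
  shows "\<bar>clipV eta gl t (Vleaf lam I) - clipV eta gl t (Vleaf lam J)\<bar> \<le> DeltaV lam eta gl t"
proof -
  have B: "gl * (1-eta)^(t-1) > 0" using assms by simp
  show ?thesis
    unfolding clipV_eq[OF B] DeltaV_def
    using clip_lip[OF B, of "Vleaf lam I" "Vleaf lam J"] vleaf_sens[OF assms(1,5,6,7)] assms(4)
    by (simp add: mult.assoc)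
qed

definition Fh :: "real \<Rightarrow> ('d::finite) dataset \<Rightarrow> real" where
  "Fh lam X = (gsum X)^2 / (real (size X) + lam)"

lemma Fh_add_sens:
  assumes "lam > 0" "bnd gl I" "\<bar>grad r\<bar> \<le> gl"
  shows "\<bar>Fh lam (add_mset r I) - Fh lam I\<bar> \<le> 3 * gl^2"
proof -
  have "\<bar>gsum I\<bar> \<le> real (size I) * gl" using gsum_bound assms by blast
  also have "\<dots> \<le> (real (size I) + lam) * gl"
    using assms by (intro mult_right_mono) auto
  finally have h: "\<bar>gsum I\<bar> \<le> (real (size I) + lam) * gl" .
  have a: "real (size I) + lam > 0" using assms by (simp add: add_nonneg_pos)
  from f_sens[OF a h assms(3)] show ?thesis
    by (simp add: Fh_def add.commute add.left_commute)
qed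

lemma Fh_sens:
  assumes "lam > 0" "bnd gl I" "bnd gl J" "clos gl I J"
  shows "\<bar>Fh lam I - Fh lam J\<bar> \<le> 3 * gl^2"
proof -
  from assms(4) consider "I = J" | r where "\<bar>grad r\<bar> \<le> gl" "J = add_mset r I"
    | r where "\<bar>grad r\<bar> \<le> gl" "I = add_mset r J" unfolding clos_def by blast
  then show ?thesis
  proof cases
    case 1 then show ?thesis by auto
  next
    case (2 r) then show ?thesis using Fh_add_sens[of lam gl I r] assms by (simp add: abs_minus_commute)
  next
    case (3 r) then show ?thesis using Fh_add_sens[of lam gl J r] assms by simp
  qed
qed

lemma bnd_left[simp]: "bnd gl I \<Longrightarrow> bnd gl (left_part c I)"
  and bnd_right[simp]: "bnd gl I \<Longrightarrow> bnd gl (right_part c I)"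
  by (auto simp: bnd_def left_part_def right_part_def)

lemma clos_refl[simp]: "clos gl I I" by (simp add: clos_def)

lemma clos_parts:
  assumes "clos gl I J"
  shows "(left_part c I = left_part c J \<and> clos gl (right_part c I) (right_part c J)) \<or>
         (right_part c I = right_part c J \<and> clos gl (left_part c I) (left_part c J))"
  using assms unfolding clos_def left_part_def right_part_def
  by (elim disjE exE conjE) (auto split: if_splits)

lemma gain_sens:
  assumes "lam > 0" "bnd gl I" "bnd gl J" "clos gl I J"
  shows "\<bar>Gain lam (left_part c I) (right_part c I) - Gain lam (left_part c J) (right_part c J)\<bar> \<le> DeltaG gl"
proof -
  have G: "Gain lam X Y = Fh lam X + Fh lam Y" for X Y :: "'a dataset" by (simp add: Gain_def Fh_def)
  from clos_parts[OF assms(4), of c] show ?thesis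
    unfolding G DeltaG_def
    using Fh_sens[of lam gl "left_part c I" "left_part c J"]
          Fh_sens[of lam gl "right_part c I" "right_part c J"] assms
    by auto
qed


lemma pmf_exp_mech:
  assumes "finite C" "C \<noteq> {}"
  shows "pmf (exp_mech lam gl en C I) c =
    (if c \<in> C then split_weight lam gl en I c / (\<Sum>c'\<in>C. split_weight lam gl en I c') else 0)"
proof -
  define w where "w = split_weight lam gl en I"
  define W where "W = (\<Sum>c'\<in>C. w c')"
  have wpos: "w c > 0" for c by (simp add: w_def split_weight_def)
  have Wpos: "W > 0" unfolding W_def using assms wpos by (intro sum_pos) auto
  define f where "f = (\<lambda>c. if c \<in> C then w c / W else 0)"
  have nn: "\<And>x. 0 \<le> f x" using wpos Wpos by (simp add: f_def less_imp_le)
  have "(\<lambda>c. ennreal (f c)) = (\<lambda>c. ennreal (w c / W) * indicator C c)"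
    by (auto simp: fun_eq_iff f_def split: split_indicator)
  then have "(\<integral>\<^sup>+c. ennreal (f c) \<partial>count_space UNIV) = (\<integral>\<^sup>+c. ennreal (w c / W) \<partial>count_space C)"
    by (simp add: nn_integral_count_space_indicator)
  also have "\<dots> = (\<Sum>c\<in>C. ennreal (w c / W))" using assms by (simp add: nn_integral_count_space_finite)
  also have "\<dots> = ennreal (\<Sum>c\<in>C. w c / W)" using wpos Wpos by (intro sum_ennreal) (simp add: less_imp_le)
  also have "(\<Sum>c\<in>C. w c / W) = 1" using Wpos by (simp add: W_def sum_divide_distrib[symmetric])
  finally have int: "(\<integral>\<^sup>+c. ennreal (f c) \<partial>count_space UNIV) = 1" by simp
  have "exp_mech lam gl en C I = embed_pmf f"
    unfolding exp_mech_def f_def w_def W_def ..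
  then show ?thesis using pmf_embed_pmf[OF nn int] by (simp add: f_def w_def W_def)
qed

lemma exp_mech_dp:
  assumes "finite C" "C \<noteq> {}" "en \<ge> 0" "gl > 0"
    and sens: "\<And>c. \<bar>Gain lam (left_part c I) (right_part c I) - Gain lam (left_part c J) (right_part c J)\<bar> \<le> DeltaG gl"
  shows "pmf_le (exp en) (exp_mech lam gl en C I) (exp_mech lam gl en C J)"
  unfolding pmf_le_def
proof
  fix c
  define wI where "wI = split_weight lam gl en I"
  define wJ where "wJ = split_weight lam gl en J"
  have dg: "DeltaG gl > 0" using assms by (simp add: DeltaG_def)
  have wpos: "wI c > 0" "wJ c > 0" for c by (simp_all add: wI_def wJ_def split_weight_def)
  have key: "wI c \<le> exp (en/2) * wJ c" "wJ c \<le> exp (en/2) * wI c" for c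
  proof -
    let ?GI = "Gain lam (left_part c I) (right_part c I)"
    let ?GJ = "Gain lam (left_part c J) (right_part c J)"
    have "en * (?GI - ?GJ) \<le> en * DeltaG gl" "en * (?GJ - ?GI) \<le> en * DeltaG gl"
      using sens[of c] assms(3) by (intro mult_left_mono; auto)+
    then have a: "en * ?GI / (2 * DeltaG gl) \<le> en/2 + en * ?GJ / (2 * DeltaG gl)"
      and b: "en * ?GJ / (2 * DeltaG gl) \<le> en/2 + en * ?GI / (2 * DeltaG gl)"
      using dg by (simp_all add: field_simps)
    show "wI c \<le> exp (en/2) * wJ c"
      unfolding wI_def wJ_def split_weight_def exp_add[symmetric] using a by simp
    show "wJ c \<le> exp (en/2) * wI c"
      unfolding wI_def wJ_def split_weight_def exp_add[symmetric] using b by simp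
  qed
  define WI where "WI = (\<Sum>c'\<in>C. wI c')"
  define WJ where "WJ = (\<Sum>c'\<in>C. wJ c')"
  have WIpos: "WI > 0" unfolding WI_def using assms wpos by (intro sum_pos) auto
  have WJpos: "WJ > 0" unfolding WJ_def using assms wpos by (intro sum_pos) auto
  have WJ: "WJ \<le> exp (en/2) * WI"
    unfolding WI_def WJ_def sum_distrib_left by (intro sum_mono key)
  show "pmf (exp_mech lam gl en C I) c \<le> exp en * pmf (exp_mech lam gl en C J) c"
  proof (cases "c \<in> C")
    case False then show ?thesis using assms by (simp add: pmf_exp_mech)
  next
    case True
    have "wI c / WI \<le> exp (en/2) * wJ c / WI"
      using key(1)[of c] WIpos by (simp add: divide_right_mono)
    also have "\<dots> \<le> exp (en/2) * wJ c / (WJ / exp (en/2))"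
    proof (rule divide_left_mono)
      show "WJ / exp (en / 2) \<le> WI" using WJ by (simp add: field_simps)
      show "0 \<le> exp (en / 2) * wJ c" using wpos[of c] by simp
      show "0 < WI * (WJ / exp (en / 2))" using WIpos WJpos by simp
    qed
    also have "\<dots> = (exp (en/2) * exp (en/2)) * (wJ c / WJ)" by (simp add: field_simps)
    also have "exp (en/2) * exp (en/2) = exp en" by (simp add: exp_add[symmetric])
    finally show ?thesis using True assms by (simp add: pmf_exp_mech wI_def wJ_def WI_def WJ_def)
  qed
qed

lemma grow_dp:
  assumes "lam > 0" "gl > 0" "en \<ge> 0" "finite C" "C \<noteq> {}"
  shows "bnd gl I \<Longrightarrow> bnd gl J \<Longrightarrow> clos gl I J \<Longrightarrow>
     pmf_le (exp (real k * en)) (grow lam gl en C k I) (grow lam gl en C k J)"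
proof (induction k arbitrary: I J)
  case 0
  then show ?case by (simp add: pmf_le_refl)
next
  case (Suc k)
  define inner where "inner = (\<lambda>X c. bind_pmf (grow lam gl en C k (left_part c X)) (\<lambda>l.
     bind_pmf (grow lam gl en C k (right_part c X)) (\<lambda>r.
     return_pmf (\<lambda>p. case p of [] \<Rightarrow> c | b # q \<Rightarrow> (if b then l q else r q)))))"
  have g: "grow lam gl en C (Suc k) X = bind_pmf (exp_mech lam gl en C X) (inner X)" for X
    by (simp add: inner_def)
  have ek: "exp (real k * en) \<ge> 0" by simp
  have s1: "pmf_le (exp en) (bind_pmf (exp_mech lam gl en C I) (inner I)) (bind_pmf (exp_mech lam gl en C J) (inner I))"
    by (intro pmf_le_bind1 exp_mech_dp gain_sens) (use assms Suc.prems in auto)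
  have s2: "pmf_le (exp (real k * en)) (bind_pmf (exp_mech lam gl en C J) (inner I)) (bind_pmf (exp_mech lam gl en C J) (inner J))"
  proof (rule pmf_le_bind2[OF _ ek])
    fix c
    from clos_parts[OF Suc.prems(3), of c]
    show "pmf_le (exp (real k * en)) (inner I c) (inner J c)"
    proof
      assume h: "left_part c I = left_part c J \<and> clos gl (right_part c I) (right_part c J)"
      show ?thesis unfolding inner_def h[THEN conjunct1]
        by (intro pmf_le_bind2 pmf_le_bind1 Suc.IH ek) (use h Suc.prems in auto)
    next
      assume h: "right_part c I = right_part c J \<and> clos gl (left_part c I) (left_part c J)"
      show ?thesis unfolding inner_def h[THEN conjunct1]
        by (intro pmf_le_bind1 Suc.IH ek) (use h Suc.prems in auto)
    qed
  qed
  have "pmf_le (exp en * exp (real k * en)) (grow lam gl en C (Suc k) I) (grow lam gl en C (Suc k) J)"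
    using pmf_le_trans[OF s1 s2] unfolding g by simp
  moreover have "exp en * exp (real k * en) = exp (real (Suc k) * en)"
    by (simp add: exp_add[symmetric] algebra_simps)
  ultimately show ?case by simp
qed


lemma lists_Suc_eq: "{p :: bool list. length p = Suc n} = Cons True ` {p. length p = n} \<union> Cons False ` {p. length p = n}"
  by (auto simp: length_Suc_conv)

lemma finite_lists_bool: "finite {p :: bool list. length p = n}"
  using finite_lists_length_eq[of "UNIV :: bool set" n] by simp

lemma leaves_sum:
  fixes F :: "('d::finite) dataset \<Rightarrow> 'd dataset \<Rightarrow> real"
  assumes F0: "\<And>X. F X X = 0"
    and FB: "\<And>X Y. bnd gl X \<Longrightarrow> bnd gl Y \<Longrightarrow> clos gl X Y \<Longrightarrow> F X Y \<le> B"
  shows "bnd gl I \<Longrightarrow> bnd gl J \<Longrightarrow> clos gl I J \<Longrightarrow>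
     (\<Sum>p\<in>{p. length p = n}. F (node_recs s I p) (node_recs s J p)) \<le> B"
proof (induction n arbitrary: s I J)
  case 0
  have "{p :: bool list. length p = 0} = {[]}" by auto
  then show ?case using FB 0 by simp
next
  case (Suc n)
  let ?S = "{p :: bool list. length p = n}"
  have fin: "finite ?S" by (rule finite_lists_bool)
  have "(\<Sum>p\<in>{p. length p = Suc n}. F (node_recs s I p) (node_recs s J p)) =
        (\<Sum>p\<in>Cons True ` ?S. F (node_recs s I p) (node_recs s J p)) +
        (\<Sum>p\<in>Cons False ` ?S. F (node_recs s I p) (node_recs s J p))"
    unfolding lists_Suc_eq using fin by (intro sum.union_disjoint) auto
  also have "\<dots> = (\<Sum>q\<in>?S. F (node_recs (\<lambda>q'. s (True # q')) (left_part (s []) I) q)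
                              (node_recs (\<lambda>q'. s (True # q')) (left_part (s []) J) q)) +
                  (\<Sum>q\<in>?S. F (node_recs (\<lambda>q'. s (False # q')) (right_part (s []) I) q)
                              (node_recs (\<lambda>q'. s (False # q')) (right_part (s []) J) q))"
    by (simp add: sum.reindex)
  also have "\<dots> \<le> B"
    using clos_parts[OF Suc.prems(3), of "s []"]
  proof
    assume h: "left_part (s []) I = left_part (s []) J \<and> clos gl (right_part (s []) I) (right_part (s []) J)"
    show ?thesis unfolding h[THEN conjunct1] using Suc.IH[of "right_part (s []) I" "right_part (s []) J"] h Suc.prems
      by (simp add: F0)
  next
    assume h: "right_part (s []) I = right_part (s []) J \<and> clos gl (left_part (s []) I) (left_part (s []) J)"
    show ?thesis unfolding h[THEN conjunct1] using Suc.IH[of "left_part (s []) I" "left_part (s []) J"] h Suc.prems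
      by (simp add: F0)
  qed
  finally show ?case .
qed

definition lapd :: "real \<Rightarrow> real \<Rightarrow> real \<Rightarrow> real" where
  "lapd mu b x = exp (- \<bar>x - mu\<bar> / b) / (2 * b)"

lemma laplace_lapd: "laplace mu b = density lborel (\<lambda>x. ennreal (lapd mu b x))"
  by (simp add: laplace_def lapd_def)

lemma lapd_meas[measurable]: "lapd mu b \<in> borel_measurable borel"
  unfolding lapd_def by measurable

lemma lapd_nonneg: "b > 0 \<Longrightarrow> lapd mu b x \<ge> 0"
  by (simp add: lapd_def)

lemma lapd_ratio:
  assumes "b > 0"
  shows "lapd m b x \<le> exp (\<bar>m - m'\<bar> / b) * lapd m' b x"
proof -
  have "- \<bar>x - m\<bar> / b \<le> \<bar>m - m'\<bar> / b + - \<bar>x - m'\<bar> / b"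
    using assms by (simp add: field_simps)
  then have "exp (- \<bar>x - m\<bar> / b) \<le> exp (\<bar>m - m'\<bar> / b) * exp (- \<bar>x - m'\<bar> / b)"
    by (simp add: exp_add[symmetric])
  then show ?thesis using assms unfolding lapd_def
    by (simp add: divide_simps)
qed

lemma nn_int_exp_abs: "(\<integral>\<^sup>+x. ennreal (exp (- \<bar>x\<bar>)) \<partial>lborel) = 2"
proof -
  define ed where "ed = exponential_density 1"
  have edm[measurable]: "ed \<in> borel_measurable borel" unfolding ed_def by simp
  have ed1: "(\<integral>\<^sup>+x. ennreal (ed x) \<partial>lborel) = 1"
  proof -
    interpret prob_space "density lborel (\<lambda>x. ennreal (ed x))"
      unfolding ed_def using prob_space_exponential_density[of 1] by simp
    have "emeasure (density lborel (\<lambda>x. ennreal (ed x))) UNIV = 1"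
      using emeasure_space_1 by simp
    then show ?thesis by (simp add: emeasure_density)
  qed
  have ed2: "(\<integral>\<^sup>+x. ennreal (ed (- x)) \<partial>lborel) = 1"
    using nn_integral_real_affine[of "\<lambda>x. ennreal (ed x)" "-1" 0] ed1 by simp
  have "(\<integral>\<^sup>+x. ennreal (exp (- \<bar>x\<bar>)) \<partial>lborel) = (\<integral>\<^sup>+x. ennreal (ed x) + ennreal (ed (- x)) \<partial>lborel)"
  proof (intro nn_integral_cong_AE eventually_mono[OF AE_lborel_singleton[of 0]])
    fix x :: real assume "x \<noteq> 0"
    then show "ennreal (exp (- \<bar>x\<bar>)) = ennreal (ed x) + ennreal (ed (- x))"
      by (cases "x < 0") (auto simp: ed_def exponential_density_def)
  qed
  also have "\<dots> = 2" using ed1 ed2 by (subst nn_integral_add) auto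
  finally show ?thesis .
qed

lemma prob_space_laplace:
  assumes "b > 0"
  shows "prob_space (laplace mu b)"
proof
  have "emeasure (laplace mu b) (space (laplace mu b)) = (\<integral>\<^sup>+x. ennreal (lapd mu b x) \<partial>lborel)"
    by (simp add: laplace_lapd emeasure_density)
  also have "\<dots> = ennreal \<bar>b\<bar> * (\<integral>\<^sup>+x. ennreal (lapd mu b (mu + b * x)) \<partial>lborel)"
    using assms by (intro nn_integral_real_affine) auto
  also have "(\<lambda>x. ennreal (lapd mu b (mu + b * x))) = (\<lambda>x. ennreal (1/(2*b)) * ennreal (exp (- \<bar>x\<bar>)))"
    using assms by (auto simp: lapd_def fun_eq_iff abs_mult ennreal_mult[symmetric])
  also have "(\<integral>\<^sup>+x. ennreal (1/(2*b)) * ennreal (exp (- \<bar>x\<bar>)) \<partial>lborel) = ennreal (1/(2*b)) * 2"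
    by (subst nn_integral_cmult) (auto simp: nn_int_exp_abs)
  also have "ennreal \<bar>b\<bar> * (ennreal (1/(2*b)) * 2) = 1"
    using assms by (simp add: ennreal_mult[symmetric] mult.assoc[symmetric] ennreal_numeral[symmetric] del: ennreal_numeral)
  finally show "emeasure (laplace mu b) (space (laplace mu b)) = 1" .
qed


lemma PiM_dens:
  fixes g :: "'i \<Rightarrow> real \<Rightarrow> real"
  assumes L: "finite L" and gm: "\<And>p. g p \<in> borel_measurable borel"
  shows "PiM L (\<lambda>p. density lborel (\<lambda>x. ennreal (g p x))) =
         density (PiM L (\<lambda>_. lborel)) (\<lambda>x. \<Prod>p\<in>L. ennreal (g p (x p)))"
proof -
  have ps: "product_sigma_finite (\<lambda>p. density lborel (\<lambda>x. ennreal (g p x)))"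
    unfolding product_sigma_finite_def
    using gm by (subst sigma_finite_measure.sigma_finite_iff_density_finite[OF sigma_finite_lborel]) auto
  have ps2: "product_sigma_finite (\<lambda>_::'i. lborel :: real measure)"
    by (simp add: product_sigma_finite_def sigma_finite_lborel)
  have gm'[measurable]: "g p \<in> borel_measurable borel" for p by (rule gm)
  show ?thesis
  proof (rule product_sigma_finite.PiM_eqI[OF ps L, symmetric])
    show "sets (density (PiM L (\<lambda>_. lborel)) (\<lambda>x. \<Prod>p\<in>L. ennreal (g p (x p)))) =
          sets (PiM L (\<lambda>p. density lborel (\<lambda>x. ennreal (g p x))))"
      by (simp cong: sets_PiM_cong)
  next
    fix A assume A: "\<And>i. i \<in> L \<Longrightarrow> A i \<in> sets (density lborel (\<lambda>x. ennreal (g i x)))"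
    then have A': "\<And>i. i \<in> L \<Longrightarrow> A i \<in> sets borel" by simp
    have PA: "Pi\<^sub>E L A \<in> sets (PiM L (\<lambda>_. lborel :: real measure))"
      using A' L by (intro sets_PiM_I_finite) auto
    have "emeasure (density (PiM L (\<lambda>_. lborel)) (\<lambda>x. \<Prod>p\<in>L. ennreal (g p (x p)))) (Pi\<^sub>E L A) =
      (\<integral>\<^sup>+x. (\<Prod>p\<in>L. ennreal (g p (x p))) * indicator (Pi\<^sub>E L A) x \<partial>PiM L (\<lambda>_. lborel))"
      using PA by (simp add: emeasure_density)
    also have "\<dots> = (\<integral>\<^sup>+x. (\<Prod>p\<in>L. ennreal (g p (x p)) * indicator (A p) (x p)) \<partial>PiM L (\<lambda>_. lborel))"
    proof (intro nn_integral_cong)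
      fix x assume "x \<in> space (PiM L (\<lambda>_. lborel :: real measure))"
      then have x: "x \<in> PiE L (\<lambda>_. UNIV)" by (simp add: space_PiM)
      have "indicator (Pi\<^sub>E L A) x = (\<Prod>p\<in>L. indicator (A p) (x p) :: ennreal)"
        using x L by (auto simp: indicator_def PiE_def prod_zero_iff Pi_def intro!: prod.neutral)
      then show "(\<Prod>p\<in>L. ennreal (g p (x p))) * indicator (Pi\<^sub>E L A) x =
            (\<Prod>p\<in>L. ennreal (g p (x p)) * indicator (A p) (x p))"
        by (simp add: prod.distrib)
    qed
    also have "\<dots> = (\<Prod>p\<in>L. \<integral>\<^sup>+y. ennreal (g p y) * indicator (A p) y \<partial>lborel)"
      using A' L by (intro product_sigma_finite.product_nn_integral_prod[OF ps2]) auto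
    also have "\<dots> = (\<Prod>p\<in>L. emeasure (density lborel (\<lambda>x. ennreal (g p x))) (A p))"
      using A' by (intro prod.cong) (auto simp: emeasure_density)
    finally show "emeasure (density (PiM L (\<lambda>_. lborel)) (\<lambda>x. \<Prod>p\<in>L. ennreal (g p (x p)))) (Pi\<^sub>E L A) =
      (\<Prod>p\<in>L. emeasure (density lborel (\<lambda>x. ennreal (g p x))) (A p))" .
  qed
qed

lemma PiM_lap_le:
  fixes m m' :: "'i \<Rightarrow> real"
  assumes L: "finite L" and b: "b > 0" and S: "(\<Sum>p\<in>L. \<bar>m p - m' p\<bar>) \<le> e * b"
    and A: "A \<in> sets (PiM L (\<lambda>_. lborel :: real measure))"
  shows "emeasure (PiM L (\<lambda>p. laplace (m p) b)) A \<le> ennreal (exp e) * emeasure (PiM L (\<lambda>p. laplace (m' p) b)) A"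
proof -
  have eq: "PiM L (\<lambda>p. laplace (mm p) b) = density (PiM L (\<lambda>_. lborel)) (\<lambda>x. \<Prod>p\<in>L. ennreal (lapd (mm p) b (x p)))"
    for mm :: "'i \<Rightarrow> real"
    unfolding laplace_lapd by (rule PiM_dens[OF L]) simp
  have pt: "(\<Prod>p\<in>L. ennreal (lapd (m p) b (x p))) \<le> ennreal (exp e) * (\<Prod>p\<in>L. ennreal (lapd (m' p) b (x p)))" for x
  proof -
    have "(\<Prod>p\<in>L. lapd (m p) b (x p)) \<le> (\<Prod>p\<in>L. exp (\<bar>m p - m' p\<bar> / b) * lapd (m' p) b (x p))"
      using b by (intro prod_mono) (auto simp: lapd_nonneg lapd_ratio)
    also have "\<dots> = exp (\<Sum>p\<in>L. \<bar>m p - m' p\<bar> / b) * (\<Prod>p\<in>L. lapd (m' p) b (x p))"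
      using L by (simp add: prod.distrib exp_sum)
    also have "\<dots> \<le> exp e * (\<Prod>p\<in>L. lapd (m' p) b (x p))"
    proof (rule mult_right_mono)
      have "(\<Sum>p\<in>L. \<bar>m p - m' p\<bar> / b) = (\<Sum>p\<in>L. \<bar>m p - m' p\<bar>) / b" by (simp add: sum_divide_distrib)
      also have "\<dots> \<le> e" using S b by (simp add: pos_divide_le_eq)
      finally show "exp (\<Sum>p\<in>L. \<bar>m p - m' p\<bar> / b) \<le> exp e" by simp
      show "0 \<le> (\<Prod>p\<in>L. lapd (m' p) b (x p))" using b by (intro prod_nonneg) (simp add: lapd_nonneg)
    qed
    finally have r: "(\<Prod>p\<in>L. lapd (m p) b (x p)) \<le> exp e * (\<Prod>p\<in>L. lapd (m' p) b (x p))" .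
    have nn: "0 \<le> (\<Prod>p\<in>L. lapd (m' p) b (x p))" using b by (intro prod_nonneg) (simp add: lapd_nonneg)
    show ?thesis using r b nn
      by (simp add: prod_ennreal lapd_nonneg ennreal_mult[symmetric] ennreal_leI)
  qed
  have Am[measurable]: "A \<in> sets (PiM L (\<lambda>_. borel :: real measure))"
    using A by (simp cong: sets_PiM_cong)
  have "emeasure (PiM L (\<lambda>p. laplace (m p) b)) A =
        (\<integral>\<^sup>+x. (\<Prod>p\<in>L. ennreal (lapd (m p) b (x p))) * indicator A x \<partial>PiM L (\<lambda>_. lborel))"
    unfolding eq using A by (simp add: emeasure_density)
  also have "\<dots> \<le> (\<integral>\<^sup>+x. ennreal (exp e) * ((\<Prod>p\<in>L. ennreal (lapd (m' p) b (x p))) * indicator A x) \<partial>PiM L (\<lambda>_. lborel))"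
    by (intro nn_integral_mono) (metis pt mult.assoc mult_right_mono zero_le)
  also have "\<dots> = ennreal (exp e) * (\<integral>\<^sup>+x. (\<Prod>p\<in>L. ennreal (lapd (m' p) b (x p))) * indicator A x \<partial>PiM L (\<lambda>_. lborel))"
    by (intro nn_integral_cmult) measurable
  also have "\<dots> = ennreal (exp e) * emeasure (PiM L (\<lambda>p. laplace (m' p) b)) A"
    unfolding eq using A by (simp add: emeasure_density)
  finally show ?thesis .
qed


lemma pair_meas:
  assumes "\<And>p. sets (M p) = sets (borel :: real measure)"
  shows "(\<lambda>v. (s, v)) \<in> measurable (PiM (leaves Dmax) M) (outM Dmax)"
  unfolding outM_def
proof (rule measurable_Pair)
  show "(\<lambda>v. s) \<in> measurable (PiM (leaves Dmax) M) (count_space UNIV)" by simp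
  have "sets (PiM (leaves Dmax) M) = sets (PiM (leaves Dmax) (\<lambda>_. borel))"
    using assms by (intro sets_PiM_cong) auto
  then show "(\<lambda>v. v) \<in> measurable (PiM (leaves Dmax) M) (PiM (leaves Dmax) (\<lambda>_. borel :: real measure))"
    by (intro measurable_ident_sets) 
qed

lemma sets_laplace[simp]: "sets (laplace mu b) = sets borel"
  by (simp add: laplace_def)

lemma space_laplace[simp]: "space (laplace mu b) = UNIV"
  by (simp add: laplace_def)

lemma finite_leaves: "finite (leaves Dmax)"
  unfolding leaves_def by (rule finite_lists_bool)

theorem theorem7:
  fixes lam eta gl eps :: real and t Dmax :: nat
    and C :: "'d::finite split set"
    and D D' :: "'d dataset" and Out :: "((bool list \<Rightarrow> 'd split) \<times> (bool list \<Rightarrow> real)) set"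
  assumes "lam > 0" and "0 < eta" and "eta < 1" and "gl > 0" and "t \<ge> 1" and "Dmax \<ge> 1"
    and "eps > 0"
    and "finite C" and "C \<noteq> {}"
    and "\<forall>r \<in># D + D'. lab r \<in> {-1..1}"
    and "neighboring D D'"
    and "Out \<in> sets (outM Dmax)"
  shows "emeasure (TrainSingleTree lam eta gl t Dmax eps C D) Out
           \<le> ennreal (exp eps) * emeasure (TrainSingleTree lam eta gl t Dmax eps C D') Out"
proof -
  note lam = assms(1) and eta = assms(2,3) and gl = assms(4) and Dm = assms(6) and ep = assms(7)
    and Cf = assms(8,9) and Out = assms(12)
  define el where "el = eps / 2"
  define en where "en = eps / (2 * real Dmax)"
  define I0 where "I0 = filter_mset (\<lambda>r. \<bar>grad r\<bar> \<le> gl) D"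
  define I0' where "I0' = filter_mset (\<lambda>r. \<bar>grad r\<bar> \<le> gl) D'"
  define L where "L = leaves Dmax"
  define b where "b = DeltaV lam eta gl t / el"
  define lap where "lap = (\<lambda>(X::'d dataset) (s :: bool list \<Rightarrow> 'd split) p. laplace (clipV eta gl t (Vleaf lam (node_recs s X p))) b)"
  define N where "N = (\<lambda>(X::'d dataset) (s :: bool list \<Rightarrow> 'd split). distr (PiM L (lap X s)) (outM Dmax) (\<lambda>v. (s, v)))"
  define A where "A = (\<lambda>s :: bool list \<Rightarrow> 'd split. (\<lambda>v. (s, v)) -` Out \<inter> space (PiM L (\<lambda>_. lborel :: real measure)))"
  have el: "el > 0" using ep by (simp add: el_def)
  have en: "en \<ge> 0" using ep by (simp add: en_def)
  have dv: "DeltaV lam eta gl t > 0" using lam eta gl by (simp add: DeltaV_def)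
  have b: "b > 0" using el dv by (simp add: b_def)
  have Lf: "finite L" by (simp add: L_def finite_leaves)
  have TST: "TrainSingleTree lam eta gl t Dmax eps C X =
      bind (measure_pmf (grow lam gl en C Dmax (filter_mset (\<lambda>r. \<bar>grad r\<bar> \<le> gl) X)))
           (N (filter_mset (\<lambda>r. \<bar>grad r\<bar> \<le> gl) X))" for X
    by (simp add: TrainSingleTree_def Let_def el_def en_def N_def lap_def L_def b_def)
  have spl: "space (PiM L (lap X s)) = space (PiM L (\<lambda>_. lborel :: real measure))" for X s
    by (simp add: lap_def space_PiM)
  have pm: "(\<lambda>v. (s, v)) \<in> measurable (PiM L (lap X s)) (outM Dmax)" for X s
    unfolding L_def by (rule pair_meas) (simp add: lap_def)
  have pm2: "(\<lambda>v. (s, v)) \<in> measurable (PiM L (\<lambda>_. lborel :: real measure)) (outM Dmax)" for s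
    unfolding L_def by (rule pair_meas) simp
  have As: "A s \<in> sets (PiM L (\<lambda>_. lborel :: real measure))" for s
    unfolding A_def using measurable_sets[OF pm2 Out] .
  have NS: "N X s \<in> space (subprob_algebra (outM Dmax))" for X s
  proof -
    have "prob_space (PiM L (lap X s))"
      by (intro prob_space_PiM) (simp add: lap_def prob_space_laplace b)
    then have "prob_space (N X s)" unfolding N_def using pm by (rule prob_space.prob_space_distr)
    then show ?thesis by (simp add: space_subprob_algebra N_def prob_space_imp_subprob_space)
  qed
  have EB: "emeasure (TrainSingleTree lam eta gl t Dmax eps C X) Out =
      (\<integral>\<^sup>+s. emeasure (PiM L (lap (filter_mset (\<lambda>r. \<bar>grad r\<bar> \<le> gl) X) s)) (A s)
        \<partial>measure_pmf (grow lam gl en C Dmax (filter_mset (\<lambda>r. \<bar>grad r\<bar> \<le> gl) X)))" for X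
    unfolding TST
  proof (subst emeasure_bind[OF _ _ Out])
    show "space (measure_pmf (grow lam gl en C Dmax (filter_mset (\<lambda>r. \<bar>grad r\<bar> \<le> gl) X))) \<noteq> {}" by simp
    show "N (filter_mset (\<lambda>r. \<bar>grad r\<bar> \<le> gl) X) \<in> measurable (measure_pmf (grow lam gl en C Dmax (filter_mset (\<lambda>r. \<bar>grad r\<bar> \<le> gl) X))) (subprob_algebra (outM Dmax))"
      using NS by simp
    show "(\<integral>\<^sup>+s. emeasure (N (filter_mset (\<lambda>r. \<bar>grad r\<bar> \<le> gl) X) s) Out \<partial>measure_pmf (grow lam gl en C Dmax (filter_mset (\<lambda>r. \<bar>grad r\<bar> \<le> gl) X))) =
      (\<integral>\<^sup>+s. emeasure (PiM L (lap (filter_mset (\<lambda>r. \<bar>grad r\<bar> \<le> gl) X) s)) (A s)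
        \<partial>measure_pmf (grow lam gl en C Dmax (filter_mset (\<lambda>r. \<bar>grad r\<bar> \<le> gl) X)))"
      by (intro nn_integral_cong) (simp add: N_def emeasure_distr[OF pm Out] A_def spl)
  qed
  have bI: "bnd gl I0" "bnd gl I0'" by (auto simp: bnd_def I0_def I0'_def)
  have cI: "clos gl I0 I0'"
  proof -
    obtain r where r: "D' = add_mset r D \<or> D = add_mset r D'" using assms(11) unfolding neighboring_def by blast
    show ?thesis
    proof (cases "\<bar>grad r\<bar> \<le> gl")
      case True
      then show ?thesis using r unfolding clos_def I0_def I0'_def by (intro disjI2 exI[of _ r]) auto
    next
      case False
      then show ?thesis using r unfolding clos_def I0_def I0'_def by (intro disjI1) auto
    qed
  qed
  have lapc: "emeasure (PiM L (lap I0 s)) (A s) \<le> ennreal (exp el) * emeasure (PiM L (lap I0' s)) (A s)" for s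
  proof -
    have "(\<Sum>p\<in>L. \<bar>clipV eta gl t (Vleaf lam (node_recs s I0 p)) - clipV eta gl t (Vleaf lam (node_recs s I0' p))\<bar>)
          \<le> DeltaV lam eta gl t"
      unfolding L_def leaves_def
      by (rule leaves_sum[OF _ _ bI cI]) (auto intro: leaf_sens[OF lam eta gl])
    also have "\<dots> = el * b" using el by (simp add: b_def)
    finally show ?thesis unfolding lap_def by (rule PiM_lap_le[OF Lf b _ As])
  qed
  have gdp: "pmf_le (exp (real Dmax * en)) (grow lam gl en C Dmax I0) (grow lam gl en C Dmax I0')"
    by (rule grow_dp[OF lam gl en Cf bI cI])
  have "emeasure (TrainSingleTree lam eta gl t Dmax eps C D) Out =
     (\<integral>\<^sup>+s. emeasure (PiM L (lap I0 s)) (A s) \<partial>measure_pmf (grow lam gl en C Dmax I0))"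
    unfolding EB I0_def ..
  also have "\<dots> \<le> (\<integral>\<^sup>+s. ennreal (exp el) * emeasure (PiM L (lap I0' s)) (A s) \<partial>measure_pmf (grow lam gl en C Dmax I0))"
    by (intro nn_integral_mono lapc)
  also have "\<dots> = ennreal (exp el) * (\<integral>\<^sup>+s. emeasure (PiM L (lap I0' s)) (A s) \<partial>measure_pmf (grow lam gl en C Dmax I0))"
    by (rule nn_integral_cmult) simp
  also have "\<dots> \<le> ennreal (exp el) * (ennreal (exp (real Dmax * en)) * (\<integral>\<^sup>+s. emeasure (PiM L (lap I0' s)) (A s) \<partial>measure_pmf (grow lam gl en C Dmax I0')))"
    by (intro mult_left_mono nn_integral_pmf_le[OF gdp]) auto
  also have "\<dots> = ennreal (exp el * exp (real Dmax * en)) * (\<integral>\<^sup>+s. emeasure (PiM L (lap I0' s)) (A s) \<partial>measure_pmf (grow lam gl en C Dmax I0'))"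
    by (simp add: ennreal_mult mult.assoc)
  also have "exp el * exp (real Dmax * en) = exp eps"
    using Dm by (simp add: el_def en_def exp_add[symmetric])
  also have "(\<integral>\<^sup>+s. emeasure (PiM L (lap I0' s)) (A s) \<partial>measure_pmf (grow lam gl en C Dmax I0')) =
      emeasure (TrainSingleTree lam eta gl t Dmax eps C D') Out"
    unfolding EB I0'_def ..
  finally show ?thesis .
qed

end
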